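(* Let $n\ge 2$ and let $x\in\mathbb{C}^{n\times n}$ be generic (in the sense defined in the context). Fix $1\le m\le n-1$, let $\Lambda_m=\operatorname{diag}(\mu^{(m)}_1,\ldots,\mu^{(m)}_m)$ be a diagonal matrix whose diagonal entries are the eigenvalues of $x_m$ in some fixed order, let $g_m\in\mathrm{GL}(m)$ be the unique matrix with $x_m=g_m\Lambda_m g_m^{-1}$ whose last row consists entirely of ones, and define $b_m,c_m\in\mathbb{C}^m$ and $\delta_{m+1}\in\mathbb{C}$ by \[ \begin{pmatrix} g_m^{-1}&0\\0&1\end{pmatrix} x_{m+1}\begin{pmatrix} g_m&0\\0&1\end{pmatrix}=\begin{pmatrix}\Lambda_m & c_m\\ b_m^{T} & \delta_{m+1}\end{pmatrix}. \] Let $P_k(\lambda)=\det(\lambda I_k-x_k)$. Then \[ \operatorname{diag}(b_m)\operatorname{diag}(c_m)=-P_{m+1}(\Lambda_m)\bigl(P_m'(\Lambda_m)\bigr)^{-1}. \] In particular $\operatorname{diag}(b_m)\operatorname{diag}(c_m)$ is invertible.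
   Context: For a square matrix $x$, $x_k$ denotes its leading principal $k\times k$ submatrix and $E(x_k)$ the multiset of its eigenvalues. A matrix $x\in\mathbb{C}^{n\times n}$ is called generic if (G1) for every $1\le k\le n$ the eigenvalues of $x_k$ are distinct, and (G2) for every $1\le k\le n-1$, $E(x_k)\cap E(x_{k+1})=\varnothing$. Under these conditions $x_m$ is diagonalizable and every eigenvector of $x_m$ has nonzero last entry, so the normalized $g_m$ (last row all ones) exists and is unique. For $v\in\mathbb{C}^m$, $\operatorname{diag}(v)$ is the diagonal matrix with diagonal $v$; for a polynomial $P$ and diagonal $\Lambda_m$, $P(\Lambda_m)$ is the diagonal matrix with entries $P(\mu^{(m)}_i)$. *)

theory Defs
  imports "Jordan_Normal_Form.Char_Poly"
begin

definition lead_sub :: "'a mat \<Rightarrow> nat \<Rightarrow> 'a mat" where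
  "lead_sub x k = Matrix.mat k k (\<lambda>(i,j). x $$ (i,j))"

text \<open>Genericity (G1) and (G2). The multiset E(x_k) of eigenvalues is the multiset of roots
  of the characteristic polynomial; (G1) says every root has multiplicity at most one.\<close>
definition generic :: "nat \<Rightarrow> complex mat \<Rightarrow> bool" where
  "generic n x \<longleftrightarrow> x \<in> carrier_mat n n \<and>
     (\<forall>k\<in>{1..n}. \<forall>t. order t (char_poly (lead_sub x k)) \<le> 1) \<and>
     (\<forall>k\<in>{1..n-1}. \<forall>t. \<not> (eigenvalue (lead_sub x k) t \<and> eigenvalue (lead_sub x (k+1)) t))"

end

theory Submission
  imports Defs begin

lemma arrow_det:
  fixes A :: "'a :: comm_ring_1 mat"
  assumes A: "A \<in> carrier_mat (Suc m) (Suc m)" and i: "i < m"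
    and off: "\<And>k j. k < m \<Longrightarrow> j < m \<Longrightarrow> k \<noteq> j \<Longrightarrow> A $$ (k,j) = 0"
    and ii: "A $$ (i,i) = 0"
  shows "det A = - (A $$ (i,m) * A $$ (m,i) * (\<Prod>j\<in>{0..<m}-{i}. A $$ (j,j)))"
proof -
  define s where "s = Transposition.transpose i m"
  define P where "P = {p. p permutes {0..<Suc m}}"
  define f where "f = (\<lambda>p. signof p * (\<Prod>k = 0..<Suc m. A $$ (k, p k)))"
  have sP: "s \<in> P" unfolding s_def P_def using i by (auto intro: permutes_swap_id)
  have zero: "f p = 0" if p: "p \<in> P" "p \<noteq> s" for p
  proof (rule ccontr)
    assume "f p \<noteq> 0"
    have nz: "A $$ (k, p k) \<noteq> 0" if "k < Suc m" for k
    proof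
      assume "A $$ (k, p k) = 0"
      hence "(\<Prod>k = 0..<Suc m. A $$ (k, p k)) = 0" using that by (intro prod_zero) auto
      with \<open>f p \<noteq> 0\<close> show False unfolding f_def by simp
    qed
    have pp: "p permutes {0..<Suc m}" using p unfolding P_def by auto
    have rng: "\<And>k. k < Suc m \<Longrightarrow> p k < Suc m" using pp
      by (metis atLeastLessThan_iff permutes_in_image zero_le)
    have pi: "p i = m"
    proof (rule ccontr)
      assume "p i \<noteq> m"
      with rng[of i] i have "p i < m" by auto
      moreover have "A $$ (i, p i) \<noteq> 0" using nz[of i] i by simp
      ultimately have "p i = i" using off[of i "p i"] i by (cases "p i = i") auto
      with nz[of i] ii i show False by auto
    qed
    have pk: "p k = k" if "k < m" "k \<noteq> i" for k
    proof -
      have "p k \<noteq> m" using pi that permutes_inj[OF pp] by (metis injD)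
      with rng[of k] that have "p k < m" by auto
      moreover have "A $$ (k, p k) \<noteq> 0" using nz[of k] that by simp
      ultimately show ?thesis using off[of k "p k"] that by (cases "p k = k") auto
    qed
    have pm: "p m = i"
    proof (rule ccontr)
      assume ne: "p m \<noteq> i"
      have "p m \<noteq> m" using pi i permutes_inj[OF pp] by (metis injD less_irrefl)
      with rng[of m] have lt: "p m < m" by auto
      hence "p (p m) = p m" using pk ne by auto
      hence "p m = m" using permutes_inj[OF pp] by (metis injD)
      with \<open>p m \<noteq> m\<close> show False by simp
    qed
    have "p = s"
    proof
      fix k
      show "p k = s k"
      proof (cases "k < Suc m")
        case True
        then show ?thesis unfolding s_def using pi pm pk i
          by (cases "k = i"; cases "k = m"; auto simp: transpose_def)
      next
        case False
        hence "p k = k" using pp by (simp add: permutes_def)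
        then show ?thesis using False i unfolding s_def by (auto simp: transpose_def)
      qed
    qed
    with p show False by simp
  qed
  have "det A = sum f P" unfolding det_def'[OF A] f_def P_def ..
  also have "\<dots> = f s + sum f (P - {s})"
    by (rule sum.remove, insert sP, auto simp: P_def intro: finite_permutations)
  also have "sum f (P - {s}) = 0" using zero by (intro sum.neutral) auto
  also have "signof s = (-1 :: 'a)" unfolding s_def using i by (simp add: sign_swap_id)
  hence "f s = - (\<Prod>k = 0..<Suc m. A $$ (k, s k))" unfolding f_def by simp
  also have "{0..<Suc m} = insert m (insert i ({0..<m}-{i}))" using i by auto
  also have "(\<Prod>k \<in> insert m (insert i ({0..<m}-{i})). A $$ (k, s k))
      = A $$ (m, i) * (A $$ (i, m) * (\<Prod>k \<in> {0..<m}-{i}. A $$ (k, k)))"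
    using i by (subst prod.insert, simp, simp, subst prod.insert, simp, simp,
       auto simp: s_def transpose_def intro!: prod.cong)
  finally show ?thesis by (simp add: ac_simps)
qed

lemma mat_diag_cong: "(\<And>i. i < m \<Longrightarrow> f i = g i) \<Longrightarrow> mat_diag m f = mat_diag m g"
  unfolding mat_diag_def by (intro eq_matI) auto

lemma uminus_mat_diag: "- mat_diag m (f :: nat \<Rightarrow> 'a :: ring_1) = mat_diag m (\<lambda>i. - f i)"
  unfolding mat_diag_def by (intro eq_matI) auto

lemma mat_diag_invertible:
  fixes f :: "nat \<Rightarrow> 'a :: field"
  assumes "\<And>i. i < m \<Longrightarrow> f i \<noteq> 0"
  shows "invertible_mat (mat_diag m f)"
proof -
  have 1: "mat_diag m f * mat_diag m (\<lambda>i. inverse (f i)) = 1\<^sub>m m"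
    using assms by (subst mat_diag_diag, subst mat_diag_one[symmetric], intro mat_diag_cong) auto
  have 2: "mat_diag m (\<lambda>i. inverse (f i)) * mat_diag m f = 1\<^sub>m m"
    using assms by (subst mat_diag_diag, subst mat_diag_one[symmetric], intro mat_diag_cong) auto
  show ?thesis unfolding invertible_mat_def inverts_mat_def using 1 2
    by (auto simp: square_mat.simps mat_diag_def intro!: exI[of _ "mat_diag m (\<lambda>i. inverse (f i))"])
qed

lemma char_poly_diag:
  "char_poly (mat_diag m (\<mu> :: nat \<Rightarrow> 'a :: comm_ring_1)) = (\<Prod>j\<in>{0..<m}. [:- \<mu> j, 1:])"
proof -
  have "char_poly (mat_diag m \<mu>) = (\<Prod> a \<leftarrow> diag_mat (mat_diag m \<mu>). [:- a, 1:])"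
    by (rule char_poly_upper_triangular[of _ m]) (auto simp: upper_triangular_def mat_diag_def)
  also have "diag_mat (mat_diag m \<mu>) = map \<mu> [0..<m]"
    by (auto simp: diag_mat_def mat_diag_def intro: nth_equalityI)
  finally show ?thesis by (simp add: prod.distinct_set_conv_list[symmetric] o_def)
qed

lemma poly_pderiv_prod_lin:
  fixes \<mu> :: "nat \<Rightarrow> 'a :: idom"
  assumes i: "i < m"
  shows "poly (pderiv (\<Prod>j\<in>{0..<m}. [:- \<mu> j, 1:])) (\<mu> i) = (\<Prod>j\<in>{0..<m}-{i}. (\<mu> i - \<mu> j))"
proof -
  define h where "h = (\<lambda>a. \<Prod>j\<in>{0..<m}-{a}. poly [:- \<mu> j, 1:] (\<mu> i))"
  have d: "pderiv [:- c, 1:] = 1" for c :: 'a by (simp add: pderiv_pCons)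
  have "poly (pderiv (\<Prod>j\<in>{0..<m}. [:- \<mu> j, 1:])) (\<mu> i) = sum h {0..<m}"
    unfolding pderiv_prod d h_def by (simp add: poly_sum poly_prod)
  also have "\<dots> = h i + sum h ({0..<m} - {i})" using i by (intro sum.remove) auto
  also have "sum h ({0..<m} - {i}) = 0"
  proof (intro sum.neutral ballI)
    fix a assume a: "a \<in> {0..<m} - {i}"
    show "h a = 0" unfolding h_def using a i by (intro prod_zero) (auto intro!: bexI[of _ i])
  qed
  finally show ?thesis by (simp add: h_def)
qed

theorem mainTheorem1:
  fixes n m :: nat and x g g_inv :: "complex mat" and \<mu> :: "nat \<Rightarrow> complex"
  assumes n2: "n \<ge> 2"
    and x: "x \<in> carrier_mat n n"
    and gen: "generic n x"
    and m: "1 \<le> m" "m \<le> n - 1"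
    and mu_eig: "\<forall>i<m. eigenvalue (lead_sub x m) (\<mu> i)"
    and mu_inj: "inj_on \<mu> {..<m}"
    and g: "g \<in> carrier_mat m m" "g_inv \<in> carrier_mat m m"
    and g_inv: "g * g_inv = 1\<^sub>m m" "g_inv * g = 1\<^sub>m m"
    and g_diag: "lead_sub x m = g * mat_diag m \<mu> * g_inv"
    and g_last: "\<forall>j<m. g $$ (m - 1, j) = 1"
  defines "b \<equiv> (\<lambda>i. (four_block_mat g_inv (0\<^sub>m m 1) (0\<^sub>m 1 m) (1\<^sub>m 1) * lead_sub x (m + 1)
                 * four_block_mat g (0\<^sub>m m 1) (0\<^sub>m 1 m) (1\<^sub>m 1)) $$ (m, i))"
    and "c \<equiv> (\<lambda>i. (four_block_mat g_inv (0\<^sub>m m 1) (0\<^sub>m 1 m) (1\<^sub>m 1) * lead_sub x (m + 1)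
                 * four_block_mat g (0\<^sub>m m 1) (0\<^sub>m 1 m) (1\<^sub>m 1)) $$ (i, m))"
  shows "invertible_mat (mat_diag m (\<lambda>i. poly (pderiv (char_poly (lead_sub x m))) (\<mu> i)))
       \<and> mat_diag m b * mat_diag m c =
           - (mat_diag m (\<lambda>i. poly (char_poly (lead_sub x (m + 1))) (\<mu> i))
              * mat_diag m (\<lambda>i. inverse (poly (pderiv (char_poly (lead_sub x m))) (\<mu> i))))
       \<and> invertible_mat (mat_diag m b * mat_diag m c)"
  proof -
  let ?X = "lead_sub x (m + 1)"
  let ?Xm = "lead_sub x m"
  define Gb where "Gb = four_block_mat g (0\<^sub>m m 1) (0\<^sub>m 1 m) (1\<^sub>m 1)"
  define Gi where "Gi = four_block_mat g_inv (0\<^sub>m m 1) (0\<^sub>m 1 m) (1\<^sub>m 1 :: complex mat)"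
  define M where "M = Gi * ?X * Gb"
  define U where "U = Matrix.mat m 1 (\<lambda>(i,j). x $$ (i, m))"
  define V where "V = Matrix.mat 1 m (\<lambda>(i,j). x $$ (m, j))"
  define D where "D = Matrix.mat 1 1 (\<lambda>(i,j). x $$ (m, m))"
  have b': "b = (\<lambda>i. M $$ (m, i))" unfolding b_def M_def Gi_def Gb_def ..
  have c': "c = (\<lambda>i. M $$ (i, m))" unfolding assms(15) M_def Gi_def Gb_def ..
  have Xc: "?X \<in> carrier_mat (Suc m) (Suc m)" unfolding lead_sub_def by auto
  have Xmc: "?Xm \<in> carrier_mat m m" unfolding lead_sub_def by auto
  have Gbc: "Gb \<in> carrier_mat (Suc m) (Suc m)" unfolding Gb_def using g by auto
  have Gic: "Gi \<in> carrier_mat (Suc m) (Suc m)" unfolding Gi_def using g by auto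
  have Xeq: "?X = four_block_mat ?Xm U V D"
    unfolding lead_sub_def U_def V_def D_def by (intro eq_matI) (auto simp: less_Suc_eq)
  have GbGi: "Gb * Gi = 1\<^sub>m (Suc m)"
    unfolding Gb_def Gi_def
    by (subst mult_four_block_mat[of _ m m _ 1 _ 1 _ _ m _ 1], insert g g_inv, auto)
  have GiGb: "Gi * Gb = 1\<^sub>m (Suc m)"
    unfolding Gb_def Gi_def
    by (subst mult_four_block_mat[of _ m m _ 1 _ 1 _ _ m _ 1], insert g g_inv, auto)
  have Lam: "g_inv * ?Xm * g = mat_diag m \<mu>"
  proof -
    have "g_inv * ?Xm * g = g_inv * (g * (mat_diag m \<mu> * (g_inv * g)))"
      unfolding g_diag using g by (simp add: assoc_mult_mat[of _ m m _ m _ m] mult_carrier_mat[of _ m m _ m])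
    also have "\<dots> = (g_inv * g) * mat_diag m \<mu> * (g_inv * g)" using g by (simp add: assoc_mult_mat[of _ m m _ m _ m] mult_carrier_mat[of _ m m _ m])
    also have "\<dots> = mat_diag m \<mu>" unfolding g_inv
      by (simp add: left_mult_one_mat[OF mat_diag_dim] right_mult_one_mat[OF mat_diag_dim])
    finally show ?thesis .
  qed
  have Uc: "U \<in> carrier_mat m 1" and Vc: "V \<in> carrier_mat 1 m" and Dc: "D \<in> carrier_mat 1 1"
    unfolding U_def V_def D_def by auto
  have Meq: "M = four_block_mat (mat_diag m \<mu>) (g_inv * U) (V * g) D"
  proof -
    have "Gi * ?X = four_block_mat (g_inv * ?Xm) (g_inv * U) V D"
      unfolding Xeq Gi_def
      by (subst mult_four_block_mat[of _ m m _ 1 _ 1 _ _ m _ 1], insert g g_inv Xmc Uc Vc Dc, auto)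
    hence "M = four_block_mat (g_inv * ?Xm) (g_inv * U) V D * Gb" unfolding M_def by simp
    also have "\<dots> = four_block_mat (g_inv * ?Xm * g) (g_inv * U) (V * g) D"
      unfolding Gb_def
      by (subst mult_four_block_mat[of _ m m _ 1 _ 1 _ _ m _ 1], insert g g_inv Xmc Uc Vc Dc, auto)
    finally show ?thesis unfolding Lam .
  qed
  have Mc: "M \<in> carrier_mat (Suc m) (Suc m)" unfolding M_def using Gbc Gic Xc by auto
  have cpX: "char_poly ?X = char_poly M"
  proof (rule char_poly_similar)
    have "Gb * M * Gi = (Gb * Gi) * ?X * (Gb * Gi)" unfolding M_def using Gbc Gic Xc
      by (simp add: assoc_mult_mat[of _ "Suc m" "Suc m" _ "Suc m" _ "Suc m"] mult_carrier_mat[of _ "Suc m" "Suc m" _ "Suc m"])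
    also have "\<dots> = ?X" unfolding GbGi using Xc
      by (simp add: left_mult_one_mat[OF Xc] right_mult_one_mat[OF Xc])
    finally have "?X = Gb * M * Gi" by simp
    thus "similar_mat ?X M" unfolding similar_mat_def similar_mat_wit_def
      using Gbc Gic Xc Mc GbGi GiGb by (intro exI[of _ Gb] exI[of _ Gi]) (auto simp: Let_def)
  qed
  have cpXm: "char_poly ?Xm = (\<Prod>j\<in>{0..<m}. [:- \<mu> j, 1:])"
  proof -
    have "similar_mat ?Xm (mat_diag m \<mu>)" unfolding similar_mat_def similar_mat_wit_def
      using g g_inv g_diag Xmc by (intro exI[of _ g] exI[of _ g_inv]) (auto simp: Let_def)
    hence "char_poly ?Xm = char_poly (mat_diag m \<mu>)" by (rule char_poly_similar)
    thus ?thesis by (simp add: char_poly_diag)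
  qed
  define Q where "Q = (\<lambda>i. \<Prod>j\<in>{0..<m}-{i}. (\<mu> i - \<mu> j))"
  have Qnz: "Q i \<noteq> 0" if "i < m" for i
    unfolding Q_def using that mu_inj by (auto simp: inj_on_def)
  have dP: "poly (pderiv (char_poly ?Xm)) (\<mu> i) = Q i" if "i < m" for i
    unfolding cpXm Q_def by (rule poly_pderiv_prod_lin[OF that])
  have Mij: "M $$ (a, j) = (if a = j then \<mu> a else 0)" if "a < m" "j < m" for a j
    unfolding Meq using that by (auto simp: mat_diag_def)
  have P1: "poly (char_poly ?X) (\<mu> i) = - (c i * b i * Q i)" if i: "i < m" for i
  proof -
    define A where "A = - char_matrix M (\<mu> i)"
    have Ac: "A \<in> carrier_mat (Suc m) (Suc m)" unfolding A_def using Mc by auto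
    have Aij: "A $$ (a, j) = (if a = j then \<mu> i else 0) - M $$ (a, j)" if "a < Suc m" "j < Suc m" for a j
      unfolding A_def char_matrix_def using that Mc by auto
    have "poly (char_poly ?X) (\<mu> i) = det A" unfolding cpX A_def by (rule char_poly_matrix[OF Mc])
    also have "\<dots> = - (A $$ (i,m) * A $$ (m,i) * (\<Prod>j\<in>{0..<m}-{i}. A $$ (j,j)))"
      using i by (intro arrow_det[OF Ac i]) (auto simp: Aij[of i i] Aij Mij)
    also have "(\<Prod>j\<in>{0..<m}-{i}. A $$ (j,j)) = Q i"
      unfolding Q_def by (intro prod.cong) (auto simp: Aij Mij)
    also have "A $$ (i,m) = - c i" using i by (simp add: Aij c')
    also have "A $$ (m,i) = - b i" using i by (simp add: Aij b')
    finally show ?thesis by simp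
  qed
  have P1nz: "poly (char_poly ?X) (\<mu> i) \<noteq> 0" if "i < m" for i
  proof
    assume "poly (char_poly ?X) (\<mu> i) = 0"
    hence "eigenvalue ?X (\<mu> i)" using eigenvalue_root_char_poly[OF Xc] by simp
    moreover have "eigenvalue ?Xm (\<mu> i)" using mu_eig that by simp
    moreover have "m \<in> {1..n-1}" using m by simp
    ultimately show False using gen unfolding generic_def by blast
  qed
  show ?thesis
  proof (intro conjI)
    show "invertible_mat (mat_diag m (\<lambda>i. poly (pderiv (char_poly ?Xm)) (\<mu> i)))"
      by (rule mat_diag_invertible) (simp add: dP Qnz)
    show "mat_diag m b * mat_diag m c =
           - (mat_diag m (\<lambda>i. poly (char_poly ?X) (\<mu> i))
              * mat_diag m (\<lambda>i. inverse (poly (pderiv (char_poly ?Xm)) (\<mu> i))))"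
      unfolding mat_diag_diag uminus_mat_diag
    proof (intro mat_diag_cong)
      fix i assume i: "i < m"
      show "b i * c i = - (poly (char_poly ?X) (\<mu> i) * inverse (poly (pderiv (char_poly ?Xm)) (\<mu> i)))"
        unfolding P1[OF i] dP[OF i] using Qnz[OF i] by (simp add: field_simps)
    qed
    show "invertible_mat (mat_diag m b * mat_diag m c)"
      unfolding mat_diag_diag
      by (rule mat_diag_invertible) (use P1 P1nz in fastforce)
  qed
qed

end
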